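(* Let $n$ and $r$ be positive integers with $n\geq (r^2+r)/2$. Then $b(\mathrm{S}_{n,r})=\left\lceil\frac{2n-2}{r+1}\right\rceil$.
   Context: $\mathrm{S}_{n,r}$ denotes the symmetric group $\mathrm{S}_n$ acting naturally on the set of $r$-element subsets of $[n]=\{1,\dots,n\}$. For a permutation group $G$ on a set $\Omega$, $b(G)$ is the minimum size of a subset of $\Omega$ whose pointwise stabiliser in $G$ is trivial. *)

theory Defs
  imports "HOL-Combinatorics.Permutations" Complex_Main
begin

definition rsubsets :: "nat \<Rightarrow> nat \<Rightarrow> nat set set" where
  "rsubsets n r = {A. A \<subseteq> {1..n} \<and> card A = r}"

definition is_base_Snr :: "nat \<Rightarrow> nat \<Rightarrow> nat set set \<Rightarrow> bool" where
  "is_base_Snr n r B \<longleftrightarrow> B \<subseteq> rsubsets n r \<and>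
     (\<forall>\<sigma>. \<sigma> permutes {1..n} \<and> (\<forall>A\<in>B. \<sigma> ` A = A) \<longrightarrow> \<sigma> = id)"

definition base_size_Snr :: "nat \<Rightarrow> nat \<Rightarrow> nat" where
  "base_size_Snr n r = (LEAST k. \<exists>B. is_base_Snr n r B \<and> card B = k)"

end

theory Submission
  imports Defs
begin


lemma double_count:
  assumes "finite V" "finite P" "\<forall>A\<in>P. A \<subseteq> V"
  shows "(\<Sum>A\<in>P. card A) = (\<Sum>x\<in>V. card {A\<in>P. x\<in>A})"
proof -
  have fA: "\<forall>A\<in>P. finite A" using assms finite_subset by blast
  have "(\<Sum>A\<in>P. card A) = card (SIGMA A:P. A)" using fA assms(2) by simp
  also have "(SIGMA A:P. A) = prod.swap ` (SIGMA x:V. {A\<in>P. x\<in>A})" using assms(3) by force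
  also have "card \<dots> = card (SIGMA x:V. {A\<in>P. x\<in>A})" by (rule card_image) (simp add: inj_on_def)
  also have "\<dots> = (\<Sum>x\<in>V. card {A\<in>P. x\<in>A})" using assms(1,2) by simp
  finally show ?thesis .
qed

definition design :: "nat set \<Rightarrow> (nat \<Rightarrow> nat \<Rightarrow> bool) \<Rightarrow> nat set set" where
  "design Sg adj = insert {} ((\<lambda>x. {x}) ` Sg \<union> {{x,y} | x y. adj x y})"

locale dsetup =
  fixes k :: nat and Sg :: "nat set" and adj :: "nat \<Rightarrow> nat \<Rightarrow> bool"
  assumes Sg: "Sg \<subseteq> {0..<k}"
    and adjk: "\<And>x y. adj x y \<Longrightarrow> x < k \<and> y < k \<and> x \<noteq> y"
    and sym: "\<And>x y. adj x y \<Longrightarrow> adj y x"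
begin

abbreviation "D \<equiv> design Sg adj"

lemma pairs_sub: "{{x,y} | x y. adj x y} \<subseteq> Pow {0..<k}"
  using adjk by auto

lemma D_sub: "D \<subseteq> Pow {0..<k}"
  using Sg pairs_sub unfolding design_def by auto

lemma D_fin: "finite D"
  by (rule finite_subset[OF D_sub]) simp

lemma D_empty: "{} \<in> D" unfolding design_def by simp

lemma D_single: "x \<in> Sg \<Longrightarrow> {x} \<in> D" unfolding design_def by simp

lemma D_card2: "A \<in> D \<Longrightarrow> card A \<le> 2"
  unfolding design_def by (auto simp: card_insert_if)

lemma nbr_fin: "finite {y. adj x y}"
  by (rule finite_subset[of _ "{0..<k}"]) (use adjk in auto)

lemma D_deg:
  assumes "x < k"
  shows "card {A\<in>D. x\<in>A} = (if x \<in> Sg then 1 else 0) + card {y. adj x y}"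
proof -
  let ?S = "(if x \<in> Sg then {{x}} else {})"
  have eq: "{A\<in>D. x\<in>A} = ?S \<union> (\<lambda>y. {x,y}) ` {y. adj x y}"
  proof
    show "{A\<in>D. x\<in>A} \<subseteq> ?S \<union> (\<lambda>y. {x,y}) ` {y. adj x y}"
    proof
      fix A assume A: "A \<in> {A\<in>D. x\<in>A}"
      show "A \<in> ?S \<union> (\<lambda>y. {x,y}) ` {y. adj x y}"
      proof (cases "A \<in> (\<lambda>x. {x}) ` Sg")
        case True thus ?thesis using A by auto
      next
        case False
        then obtain a b where ab: "A = {a,b}" "adj a b" using A unfolding design_def by auto
        show ?thesis
        proof (cases "x = a")
          case True thus ?thesis using ab by auto
        next
          case False
          hence "x = b" using A ab by auto
          hence "A = {x,a}" "adj x a" using ab sym by auto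
          thus ?thesis by auto
        qed
      qed
    qed
    show "?S \<union> (\<lambda>y. {x,y}) ` {y. adj x y} \<subseteq> {A\<in>D. x\<in>A}"
      unfolding design_def by auto
  qed
  have disj: "?S \<inter> (\<lambda>y. {x,y}) ` {y. adj x y} = {}"
    using adjk by (auto simp: doubleton_eq_iff)
  have inj: "inj_on (\<lambda>y. {x,y}) {y. adj x y}"
    using adjk by (auto simp: inj_on_def doubleton_eq_iff)
  have "card {A\<in>D. x\<in>A} = card ?S + card ((\<lambda>y. {x,y}) ` {y. adj x y})"
    unfolding eq by (rule card_Un_disjoint) (use nbr_fin disj in auto)
  also have "card ((\<lambda>y. {x,y}) ` {y. adj x y}) = card {y. adj x y}"
    by (rule card_image[OF inj])
  finally show ?thesis by simp
qed

lemma D_count: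
  assumes "\<forall>x<k. card {A\<in>D. x\<in>A} = r"
  shows "2 * card D = 2 + card Sg + k * r"
proof -
  let ?P = "{{x,y} | x y. adj x y}"
  let ?S = "(\<lambda>x. {x}) ` Sg"
  have finP: "finite ?P" by (rule finite_subset[OF pairs_sub]) simp
  have finS: "finite ?S" by (rule finite_imageI, rule finite_subset[OF Sg]) simp
  have c2: "\<forall>A\<in>?P. card A = 2" using adjk by auto
  have "(\<Sum>A\<in>D. card A) = (\<Sum>x\<in>{0..<k}. card {A\<in>D. x\<in>A})"
    by (rule double_count) (use D_fin D_sub in auto)
  also have "\<dots> = k * r" using assms by simp
  finally have s: "(\<Sum>A\<in>D. card A) = k * r" .
  have c1: "\<forall>A\<in>?S. card A = 1" by simp
  have dSP: "?S \<inter> ?P = {}"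
  proof (rule ccontr)
    assume "?S \<inter> ?P \<noteq> {}"
    then obtain A where A: "A \<in> ?S" "A \<in> ?P" by blast
    have "card A = 1" using c1 A(1) by blast
    moreover have "card A = 2" using c2 A(2) by blast
    ultimately show False by simp
  qed
  have eP1: "{} \<notin> ?P"
  proof
    assume "{} \<in> ?P"
    hence "card ({}::nat set) = 2" using c2 by blast
    thus False by simp
  qed
  have eP2: "{} \<notin> ?S" by auto
  have eP: "{} \<notin> ?S \<union> ?P" using eP1 eP2 by (simp only: Un_iff) simp
  have "(\<Sum>A\<in>D. card A) = card ({}::nat set) + (\<Sum>A\<in>?S \<union> ?P. card A)"
    unfolding design_def using finS finP eP by (subst sum.insert) auto
  also have "(\<Sum>A\<in>?S \<union> ?P. card A) = (\<Sum>A\<in>?S. card A) + (\<Sum>A\<in>?P. card A)"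
    by (rule sum.union_disjoint) (use finS finP dSP in auto)
  also have "(\<Sum>A\<in>?S. card A) = (\<Sum>A\<in>?S. 1)" by (rule sum.cong) (use c1 in auto)
  also have "\<dots> = card ?S" by simp
  also have "(\<Sum>A\<in>?P. card A) = 2 * card ?P" using c2 by simp
  finally have s2: "k * r = card ?S + 2 * card ?P" using s by simp
  have cS: "card ?S = card Sg" by (rule card_image) (simp add: inj_on_def)
  have "card D = 1 + card (?S \<union> ?P)"
    unfolding design_def using finS finP eP by (subst card.insert) auto
  also have "card (?S \<union> ?P) = card ?S + card ?P"
    by (rule card_Un_disjoint) (use finS finP dSP in auto)
  finally show ?thesis using s2 cS by simp
qed

end



lemma lower:
  assumes "is_base_Snr n r B"
  shows "2*n \<le> card B * (r+1) + 2"
proof -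
  have Bsub: "B \<subseteq> rsubsets n r" and stab: "\<And>\<sigma>. \<sigma> permutes {1..n} \<Longrightarrow> (\<forall>A\<in>B. \<sigma> ` A = A) \<Longrightarrow> \<sigma> = id"
    using assms unfolding is_base_Snr_def by auto
  have sub: "\<forall>A\<in>B. A \<subseteq> {1..n}" and cr: "\<forall>A\<in>B. card A = r" using Bsub unfolding rsubsets_def by auto
  have finB: "finite B"
    by (rule finite_subset[of _ "Pow {1..n}"]) (use sub in auto)
  define sig where "sig x = {A\<in>B. x\<in>A}" for x
  have inj: "inj_on sig {1..n}"
  proof (rule inj_onI, rule ccontr)
    fix x y assume xy: "x \<in> {1..n}" "y \<in> {1..n}" "sig x = sig y" "x \<noteq> y"
    have "\<forall>A\<in>B. x \<in> A \<longleftrightarrow> y \<in> A" using xy(3) unfolding sig_def by blast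
    hence "\<forall>A\<in>B. transpose x y ` A = A" by simp
    moreover have "transpose x y permutes {1..n}" using xy by (intro permutes_swap_id)
    ultimately have "transpose x y = id" using stab by blast
    thus False using xy(4) by (simp add: transpose_eq_id_iff)
  qed
  have s1: "(\<Sum>A\<in>B. card A) = card B * r" using cr by simp
  have s2: "(\<Sum>A\<in>B. card A) = (\<Sum>x\<in>{1..n}. card (sig x))"
    unfolding sig_def by (rule double_count) (use finB sub in auto)
  define E0 where "E0 = {x\<in>{1..n}. sig x = {}}"
  define E1 where "E1 = {x\<in>{1..n}. card (sig x) = 1}"
  have "card E0 = card (sig ` E0)" using inj by (intro card_image[symmetric]) (auto simp: E0_def intro: inj_on_subset)
  also have "\<dots> \<le> card {{}::nat set set}" by (rule card_mono) (auto simp: E0_def)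
  finally have c0: "card E0 \<le> 1" by simp
  have "card E1 = card (sig ` E1)" using inj by (intro card_image[symmetric]) (auto simp: E1_def intro: inj_on_subset)
  also have "\<dots> \<le> card ((\<lambda>A. {A}) ` B)"
  proof (rule card_mono)
    show "finite ((\<lambda>A. {A}) ` B)" using finB by simp
    show "sig ` E1 \<subseteq> (\<lambda>A. {A}) ` B"
    proof
      fix S assume "S \<in> sig ` E1"
      then obtain x where "x \<in> E1" "S = sig x" by auto
      hence "card S = 1" "S \<subseteq> B" unfolding E1_def sig_def by auto
      thus "S \<in> (\<lambda>A. {A}) ` B" by (auto simp: card_Suc_eq)
    qed
  qed
  also have "\<dots> \<le> card B" by (rule card_image_le[OF finB])
  finally have c1: "card E1 \<le> card B" .
  have pt: "2 \<le> card (sig x) + 2 * (if x \<in> E0 then 1 else 0) + (if x \<in> E1 then 1 else 0)" if "x \<in> {1..n}" for x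
  proof -
    have "finite (sig x)" using finB unfolding sig_def by simp
    thus ?thesis using that unfolding E0_def E1_def by (cases "card (sig x)") auto
  qed
  have "(\<Sum>x\<in>{1..n}. (2::nat)) \<le> (\<Sum>x\<in>{1..n}. card (sig x) + 2 * (if x \<in> E0 then 1 else 0) + (if x \<in> E1 then 1 else 0))"
    by (rule sum_mono) (rule pt)
  also have "\<dots> = (\<Sum>x\<in>{1..n}. card (sig x)) + 2 * card E0 + card E1"
    by (simp add: sum.distrib sum_distrib_left[symmetric] E0_def E1_def sum.If_cases) (simp add: Int_def)
  finally have "2 * n \<le> card B * r + 2 * card E0 + card E1" using s1 s2 by simp
  thus ?thesis using c0 c1 by simp
qed



lemma base_from_design:
  assumes Qs: "Q \<subseteq> Pow {0..<k}" and cQ: "card Q = n" and dg: "\<forall>x<k. card {A\<in>Q. x\<in>A} = r"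
  shows "\<exists>B. is_base_Snr n r B \<and> card B \<le> k"
proof -
  have finQ: "finite Q" using Qs finite_subset by (metis finite_Pow_iff finite_atLeastLessThan)
  obtain h where h: "bij_betw h Q {1..n}" using bij_betw_iff_card[of Q "{1..n}"] finQ cQ by auto
  have injh: "inj_on h Q" and imh: "h ` Q = {1..n}" using h by (auto simp: bij_betw_def)
  define Bj where "Bj j = h ` {A\<in>Q. j\<in>A}" for j
  define F where "F = Bj ` {0..<k}"
  have "F \<subseteq> rsubsets n r"
  proof
    fix S assume "S \<in> F"
    then obtain j where j: "j < k" "S = Bj j" unfolding F_def by auto
    have "S \<subseteq> {1..n}" using j imh unfolding Bj_def by auto
    moreover have "card S = card {A\<in>Q. j\<in>A}" unfolding j(2) Bj_def
      by (rule card_image, rule inj_on_subset[OF injh]) auto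
    hence "card S = r" using j dg by simp
    ultimately show "S \<in> rsubsets n r" by (simp add: rsubsets_def)
  qed
  moreover have "\<sigma> = id" if sp: "\<sigma> permutes {1..n}" and fx: "\<forall>S\<in>F. \<sigma> ` S = S" for \<sigma>
  proof
    fix z show "\<sigma> z = id z"
    proof (cases "z \<in> {1..n}")
      case False thus ?thesis using sp by (simp add: permutes_not_in)
    next
      case True
      then obtain A where A: "A \<in> Q" "z = h A" using imh by (metis imageE)
      have "\<sigma> z \<in> {1..n}" using True sp by (metis permutes_in_image)
      then obtain A' where A': "A' \<in> Q" "\<sigma> z = h A'" using imh by (metis imageE)
      have injs: "inj \<sigma>" using sp by (simp add: permutes_inj)
      have eqj: "j \<in> A \<longleftrightarrow> j \<in> A'" if "j < k" for j
      proof -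
        have e: "\<sigma> ` Bj j = Bj j" using fx that unfolding F_def by auto
        have "j \<in> A \<longleftrightarrow> z \<in> Bj j" using A injh unfolding Bj_def by (auto simp: inj_on_def)
        also have "\<dots> \<longleftrightarrow> \<sigma> z \<in> \<sigma> ` Bj j" using injs by (simp add: inj_image_mem_iff)
        also have "\<dots> \<longleftrightarrow> \<sigma> z \<in> Bj j" using e by simp
        also have "\<dots> \<longleftrightarrow> j \<in> A'" using A' injh unfolding Bj_def by (auto simp: inj_on_def)
        finally show ?thesis .
      qed
      have sb: "A \<subseteq> {0..<k}" "A' \<subseteq> {0..<k}" using A A' Qs by auto
      have "A = A'"
      proof (rule set_eqI)
        fix j show "j \<in> A \<longleftrightarrow> j \<in> A'"
        proof (cases "j < k")
          case True thus ?thesis using eqj by simp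
        next
          case False thus ?thesis using sb by auto
        qed
      qed
      thus ?thesis using A A' by simp
    qed
  qed
  ultimately have "is_base_Snr n r F" unfolding is_base_Snr_def by blast
  moreover have "card F \<le> k" unfolding F_def using card_image_le[of "{0..<k}" Bj] by simp
  ultimately show ?thesis by blast
qed



lemma reduce:
  fixes k :: nat and Q :: "nat set set"
  assumes Qs: "Q \<subseteq> Pow {0..<k}" and dg: "\<forall>x<k. card {A\<in>Q. x\<in>A} = r" and c2: "\<forall>A\<in>Q. card A \<le> 2"
    and Xs: "X \<subseteq> {0..<k}" and XQ: "\<forall>x\<in>X. {x} \<in> Q" and X3: "card X \<ge> 3"
  shows "\<exists>Q'. Q' \<subseteq> Pow {0..<k} \<and> (\<forall>x<k. card {A\<in>Q'. x\<in>A} = r) \<and> card Q' + card X = card Q + 1"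
proof -
  let ?T = "(\<lambda>x. {x}) ` X"
  define Q' where "Q' = insert X (Q - ?T)"
  have finQ: "finite Q" by (rule finite_subset[OF Qs]) simp
  have finX: "finite X" using X3 by (metis card.infinite not_numeral_le_zero)
  have XnQ: "X \<notin> Q" using c2 X3 by fastforce
  have TQ: "?T \<subseteq> Q" using XQ by auto
  have cT: "card ?T = card X" by (rule card_image) (simp add: inj_on_def)
  have XnD: "X \<notin> Q - ?T" using XnQ by blast
  have "card Q' = Suc (card (Q - ?T))" unfolding Q'_def
    by (rule card_insert_disjoint) (use finQ XnD in auto)
  also have "card (Q - ?T) = card Q - card ?T" by (rule card_Diff_subset) (use finX TQ in auto)
  finally have cQ': "card Q' + card X = card Q + 1"
    using cT card_mono[OF finQ TQ] by simp
  have "Q' \<subseteq> Pow {0..<k}" unfolding Q'_def using Qs Xs by auto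
  moreover have "card {A\<in>Q'. y\<in>A} = r" if y: "y < k" for y
  proof (cases "y \<in> X")
    case True
    have fy: "finite {A\<in>Q. y\<in>A}" using finQ by simp
    have e: "{A\<in>Q'. y\<in>A} = insert X ({A\<in>Q. y\<in>A} - {{y}})"
      unfolding Q'_def using True by auto
    have yin: "{y} \<in> {A\<in>Q. y\<in>A}" using XQ True by auto
    have "card {A\<in>Q'. y\<in>A} = Suc (card ({A\<in>Q. y\<in>A} - {{y}}))"
      unfolding e by (rule card_insert_disjoint) (use fy XnQ in auto)
    also have "card ({A\<in>Q. y\<in>A} - {{y}}) = card {A\<in>Q. y\<in>A} - 1"
      using yin fy by simp
    finally show ?thesis using dg y card_gt_0_iff[of "{A\<in>Q. y\<in>A}"] yin fy by auto
  next
    case False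
    have "{A\<in>Q'. y\<in>A} = {A\<in>Q. y\<in>A}" unfolding Q'_def using False by auto
    thus ?thesis using dg y by simp
  qed
  ultimately show ?thesis using cQ' by blast
qed

lemma drop_empty:
  fixes k :: nat and Q :: "nat set set"
  assumes Qs: "Q \<subseteq> Pow {0..<k}" and dg: "\<forall>x<k. card {A\<in>Q. x\<in>A} = r" and e: "{} \<in> Q"
  shows "\<exists>Q'. Q' \<subseteq> Pow {0..<k} \<and> (\<forall>x<k. card {A\<in>Q'. x\<in>A} = r) \<and> card Q' + 1 = card Q"
proof -
  have finQ: "finite Q" by (rule finite_subset[OF Qs]) simp
  have "Q - {{}} \<subseteq> Pow {0..<k}" using Qs by auto
  moreover have "\<forall>x<k. card {A\<in>Q - {{}}. x\<in>A} = r"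
  proof (intro allI impI)
    fix x assume "x < k"
    have "{A\<in>Q - {{}}. x\<in>A} = {A\<in>Q. x\<in>A}" by auto
    thus "card {A\<in>Q - {{}}. x\<in>A} = r" using dg \<open>x<k\<close> by simp
  qed
  moreover have "card (Q - {{}}) + 1 = card Q" using finQ e
    by (simp add: card_Diff_singleton) (metis card_gt_0_iff empty_iff Suc_pred)
  ultimately show ?thesis by blast
qed

definition addk :: "nat \<Rightarrow> nat \<Rightarrow> nat \<Rightarrow> nat" where
  "addk k x d = (if x + d < k then x + d else x + d - k)"

definition adjC :: "nat \<Rightarrow> nat set \<Rightarrow> nat \<Rightarrow> nat \<Rightarrow> bool" where
  "adjC k \<Delta> x y \<longleftrightarrow> x < k \<and> y < k \<and> (\<exists>d\<in>\<Delta>. y = addk k x d)"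

lemma adjC_range:
  assumes "\<Delta> \<subseteq> {1..<k}" "adjC k \<Delta> x y"
  shows "x < k \<and> y < k \<and> x \<noteq> y"
  using assms unfolding adjC_def addk_def by (auto split: if_splits)

lemma adjC_sym:
  assumes "\<Delta> \<subseteq> {1..<k}" "\<forall>d\<in>\<Delta>. k - d \<in> \<Delta>" "adjC k \<Delta> x y"
  shows "adjC k \<Delta> y x"
proof -
  obtain d where d: "d \<in> \<Delta>" "y = addk k x d" "x < k" "y < k" using assms(3) unfolding adjC_def by auto
  have d1: "1 \<le> d" "d < k" using d(1) assms(1) by auto
  have "x = addk k y (k - d)" using d d1 unfolding addk_def by auto
  thus ?thesis using d assms(2) unfolding adjC_def by auto
qed

lemma adjC_card:
  assumes "\<Delta> \<subseteq> {1..<k}" "x < k"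
  shows "card {y. adjC k \<Delta> x y} = card \<Delta>"
proof -
  have e: "{y. adjC k \<Delta> x y} = addk k x ` \<Delta>"
    using assms unfolding adjC_def addk_def by (auto split: if_splits)
  have "inj_on (addk k x) \<Delta>"
    using assms unfolding inj_on_def addk_def by (auto split: if_splits)
  thus ?thesis unfolding e by (rule card_image)
qed



definition goodmax :: "nat \<Rightarrow> nat \<Rightarrow> nat set set \<Rightarrow> nat set \<Rightarrow> bool" where
  "goodmax k r Q Sg \<longleftrightarrow> Q \<subseteq> Pow {0..<k} \<and> (\<forall>x<k. card {A\<in>Q. x\<in>A} = r) \<and> (\<forall>A\<in>Q. card A \<le> 2)
     \<and> {} \<in> Q \<and> Sg \<subseteq> {0..<k} \<and> k \<le> card Sg + 1 \<and> (\<forall>x\<in>Sg. {x} \<in> Q)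
     \<and> 1 + k*(r+1) \<le> 2 * card Q \<and> 2 * card Q \<le> 2 + k*(r+1)"

lemma from_dsetup:
  assumes ds: "dsetup k Sg adj" and dg: "\<forall>x<k. (if x\<in>Sg then 1 else 0) + card {y. adj x y} = r"
    and cS: "k \<le> card Sg + 1"
  shows "\<exists>Q Sg. goodmax k r Q Sg"
proof -
  interpret dsetup k Sg adj by (rule ds)
  have dg': "\<forall>x<k. card {A\<in>D. x\<in>A} = r" using D_deg dg by simp
  have c: "2 * card D = 2 + card Sg + k * r" by (rule D_count[OF dg'])
  have "card Sg \<le> k" using card_mono[OF _ Sg] by simp
  hence "goodmax k r D Sg" unfolding goodmax_def using D_sub dg' D_card2 D_empty Sg cS D_single c
    by (simp add: algebra_simps)
  thus ?thesis by blast
qed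

definition Dl :: "nat \<Rightarrow> nat \<Rightarrow> nat set" where
  "Dl k t = {1..t} \<union> {k-t..<k}"

lemma Dl_props:
  assumes "t = 0 \<or> 2*t < k"
  shows "Dl k t \<subseteq> {1..<k}" "\<forall>d\<in>Dl k t. k - d \<in> Dl k t" "card (Dl k t) = 2*t"
proof -
  show "Dl k t \<subseteq> {1..<k}" using assms unfolding Dl_def by auto
  show "\<forall>d\<in>Dl k t. k - d \<in> Dl k t" using assms unfolding Dl_def by auto
  show "card (Dl k t) = 2*t"
  proof (cases "t = 0")
    case True thus ?thesis unfolding Dl_def by simp
  next
    case False
    hence "2*t < k" using assms by simp
    hence "card ({1..t} \<union> {k-t..<k}) = card {1..t} + card {k-t..<k}"
      by (intro card_Un_disjoint) auto
    thus ?thesis unfolding Dl_def using \<open>2*t<k\<close> by simp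
  qed
qed

lemma case_odd:
  assumes r: "r = 2*t+1" and tk: "t = 0 \<or> 2*t < k"
  shows "\<exists>Q Sg. goodmax k r Q Sg"
proof -
  note P = Dl_props[OF tk]
  have ds: "dsetup k {0..<k} (adjC k (Dl k t))"
    by unfold_locales (use adjC_range[OF P(1)] adjC_sym[OF P(1) P(2)] in auto)
  show ?thesis
    by (rule from_dsetup[OF ds]) (use adjC_card[OF P(1)] P(3) r in auto)
qed

lemma case_even_even:
  assumes r: "r = 2*t+2" and k: "even k" and tk: "2*t+2 \<le> k"
  shows "\<exists>Q Sg. goodmax k r Q Sg"
proof -
  have tk': "t = 0 \<or> 2*t < k" using tk by simp
  note P = Dl_props[OF tk']
  let ?D = "Dl k t \<union> {k div 2}"
  have kk: "k - k div 2 = k div 2" using k by auto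
  have nin: "k div 2 \<notin> Dl k t" using tk k unfolding Dl_def by auto
  have P1: "?D \<subseteq> {1..<k}" using P(1) tk by auto
  have P2: "\<forall>d\<in>?D. k - d \<in> ?D" using P(2) kk by auto
  have P3: "card ?D = 2*t+1" using P(3) nin
    by (simp add: card_insert_if finite_subset[OF P(1)])
  have ds: "dsetup k {0..<k} (adjC k ?D)"
    by unfold_locales (use adjC_range[OF P1] adjC_sym[OF P1 P2] in auto)
  show ?thesis
    by (rule from_dsetup[OF ds]) (use adjC_card[OF P1] P3 r in auto)
qed



definition adjE :: "nat \<Rightarrow> nat \<Rightarrow> nat \<Rightarrow> bool" where
  "adjE m x y \<longleftrightarrow> (x = 0 \<and> (y = m \<or> y = m+1)) \<or> (y = 0 \<and> (x = m \<or> x = m+1))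
     \<or> (1 \<le> x \<and> x+1 \<le> m \<and> y = x+m+1) \<or> (1 \<le> y \<and> y+1 \<le> m \<and> x = y+m+1)"

lemma adjE_card0: "m \<ge> 1 \<Longrightarrow> card {y. adjE m 0 y} = 2"
proof -
  assume "m \<ge> 1"
  have "{y. adjE m 0 y} = {m, m+1}" unfolding adjE_def using \<open>m\<ge>1\<close> by auto
  thus ?thesis by simp
qed

lemma adjE_card1:
  assumes "m \<ge> 1" "0 < x" "x < 2*m+1"
  shows "card {y. adjE m x y} = 1"
proof -
  consider "x = m \<or> x = m+1" | "x+1 \<le> m" | "x \<ge> m+2" using assms by linarith
  hence "\<exists>z. {y. adjE m x y} = {z}"
  proof cases
    case 1 hence "{y. adjE m x y} = {0}" unfolding adjE_def using assms by auto
    thus ?thesis by blast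
  next
    case 2 hence "{y. adjE m x y} = {x+m+1}" unfolding adjE_def using assms by auto
    thus ?thesis by blast
  next
    case 3 hence "{y. adjE m x y} = {x-m-1}" unfolding adjE_def using assms by auto
    thus ?thesis by blast
  qed
  thus ?thesis by auto
qed

lemma adjE_disj:
  assumes "k = 2*m+1" "t+1 \<le> m" "adjE m x y" "x < k"
  shows "\<not> adjC k (Dl k t) x y"
  using assms unfolding adjE_def adjC_def addk_def Dl_def by (auto split: if_splits)

lemma case_odd_even:
  assumes r: "r = 2*t+2" and k: "k = 2*m+1" and tm: "t+1 \<le> m"
  shows "\<exists>Q Sg. goodmax k r Q Sg"
proof -
  have tk': "t = 0 \<or> 2*t < k" using tm k by simp
  note P = Dl_props[OF tk']
  define adj where "adj x y \<longleftrightarrow> adjC k (Dl k t) x y \<or> adjE m x y" for x y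
  have m1: "m \<ge> 1" using tm by simp
  have ds: "dsetup k {1..<k} adj"
  proof unfold_locales
    fix x y assume "adj x y"
    thus "x < k \<and> y < k \<and> x \<noteq> y" using adjC_range[OF P(1)] m1 k
      unfolding adj_def adjE_def by auto
  next
    fix x y assume "adj x y"
    thus "adj y x" using adjC_sym[OF P(1) P(2)] unfolding adj_def adjE_def by auto
  qed auto
  have deg: "card {y. adj x y} = 2*t + card {y. adjE m x y}" if "x < k" for x
  proof -
    have e: "{y. adj x y} = {y. adjC k (Dl k t) x y} \<union> {y. adjE m x y}" unfolding adj_def by auto
    have f1: "finite {y. adjC k (Dl k t) x y}"
      by (rule finite_subset[of _ "{0..<k}"]) (auto simp: adjC_def)
    have f2: "finite {y. adjE m x y}"
      by (rule finite_subset[of _ "{0..<k}"]) (use k m1 in \<open>auto simp: adjE_def\<close>)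
    have "card {y. adj x y} = card {y. adjC k (Dl k t) x y} + card {y. adjE m x y}"
      unfolding e by (rule card_Un_disjoint[OF f1 f2]) (use adjE_disj[OF k tm] that in auto)
    thus ?thesis using adjC_card[OF P(1) that] P(3) by simp
  qed
  show ?thesis
  proof (rule from_dsetup[OF ds])
    show "\<forall>x<k. (if x \<in> {1..<k} then 1 else 0) + card {y. adj x y} = r"
    proof (intro allI impI)
      fix x assume x: "x < k"
      show "(if x \<in> {1..<k} then 1 else 0) + card {y. adj x y} = r"
      proof (cases "x = 0")
        case True thus ?thesis using deg[OF x] adjE_card0[OF m1] r by simp
      next
        case False thus ?thesis using deg[OF x] adjE_card1[OF m1 _ ] x k r by simp
      qed
    qed
  qed (use k in simp)
qed


theorem corollary3p3:
  fixes n r :: nat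
  assumes "n > 0" and "r > 0" and "real n \<ge> (real r ^ 2 + real r) / 2"
  shows "int (base_size_Snr n r) = \<lceil>(2 * real n - 2) / (real r + 1)\<rceil>"
proof -
  have n1: "n \<ge> 1" and r1: "r \<ge> 1" using assms(1,2) by auto
  have "real (r*r + r) \<le> real (2*n)" using assms(3) by (simp add: power2_eq_square)
  hence Hr: "r*r + r \<le> 2*n" by linarith
  define k0 where "k0 = (2*n - 2 + r) div (r+1)"
  have dm: "k0 * (r+1) + (2*n - 2 + r) mod (r+1) = 2*n - 2 + r"
    unfolding k0_def by (rule div_mult_mod_eq)
  have ml: "(2*n - 2 + r) mod (r+1) < r+1" by simp
  have h1: "2*n - 2 \<le> k0*(r+1)" using dm ml by linarith
  have h2: "k0*(r+1) \<le> 2*n - 2 + r" using dm by linarith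
  have kr: "r \<le> k0" if "r \<ge> 2"
  proof (rule ccontr)
    assume "\<not> r \<le> k0"
    hence "(k0+1)*(r+1) \<le> r*(r+1)" by (intro mult_le_mono1) simp
    hence "k0*(r+1) + r + 1 \<le> r*r + r" by (simp add: algebra_simps)
    thus False using h1 Hr that by linarith
  qed
  have "\<exists>Q Sg. goodmax k0 r Q Sg"
  proof (cases "odd r")
    case True
    then obtain t where t: "r = 2*t+1" by (metis oddE)
    have "t = 0 \<or> 2*t < k0"
    proof (cases "r \<ge> 2")
      case True thus ?thesis using kr t by simp
    next
      case False thus ?thesis using t by simp
    qed
    thus ?thesis using case_odd[OF t] by blast
  next
    case False
    then obtain s where s: "r = 2*s" by (auto elim: evenE)
    define t where "t = s - 1"
    have t: "r = 2*t+2" using s r1 unfolding t_def by simp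
    have rk: "r \<le> k0" using kr t by simp
    show ?thesis
    proof (cases "even k0")
      case True thus ?thesis using case_even_even[OF t True] rk t by simp
    next
      case False
      then obtain m where m: "k0 = 2*m+1" by (metis oddE)
      have "t+1 \<le> m" using rk t m by simp
      thus ?thesis using case_odd_even[OF t m] by blast
    qed
  qed
  then obtain Q Sg where G: "goodmax k0 r Q Sg" by blast
  have Qs: "Q \<subseteq> Pow {0..<k0}" and dg: "\<forall>x<k0. card {A\<in>Q. x\<in>A} = r"
    and c2: "\<forall>A\<in>Q. card A \<le> 2" and eQ: "{} \<in> Q" and Sgs: "Sg \<subseteq> {0..<k0}"
    and cSg: "k0 \<le> card Sg + 1" and SgQ: "\<forall>x\<in>Sg. {x} \<in> Q"
    and b1: "1 + k0*(r+1) \<le> 2 * card Q" and b2: "2 * card Q \<le> 2 + k0*(r+1)"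
    using G unfolding goodmax_def by auto
  have Nn: "n \<le> card Q" using b1 h1 n1 by linarith
  have NR: "2 * (card Q - n) \<le> r" using b2 h2 n1 by linarith
  have "\<exists>Q'. Q' \<subseteq> Pow {0..<k0} \<and> (\<forall>x<k0. card {A\<in>Q'. x\<in>A} = r) \<and> card Q' = n"
  proof -
    consider "card Q = n" | "card Q = n + 1" | "card Q \<ge> n + 2" using Nn by linarith
    thus ?thesis
    proof cases
      case 1 thus ?thesis using Qs dg by blast
    next
      case 2
      obtain Q' where "Q' \<subseteq> Pow {0..<k0}" "\<forall>x<k0. card {A\<in>Q'. x\<in>A} = r" "card Q' + 1 = card Q"
        using drop_empty[OF Qs dg eQ] by blast
      thus ?thesis using 2 by auto
    next
      case 3
      define R where "R = card Q - n"
      have R2: "R \<ge> 2" using 3 unfolding R_def by simp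
      have r4: "r \<ge> 4" using NR R2 unfolding R_def by simp
      have "R + 1 \<le> card Sg" using kr r4 cSg NR unfolding R_def by simp
      then obtain X where X: "X \<subseteq> Sg" "card X = R + 1" by (metis obtain_subset_with_card_n)
      obtain Q' where Q': "Q' \<subseteq> Pow {0..<k0}" "\<forall>x<k0. card {A\<in>Q'. x\<in>A} = r" "card Q' + card X = card Q + 1"
        using reduce[OF Qs dg c2, of X] X Sgs SgQ R2 by auto
      have "card Q' = n" using Q'(3) X(2) 3 unfolding R_def by simp
      thus ?thesis using Q' by blast
    qed
  qed
  then obtain Q' where Q': "Q' \<subseteq> Pow {0..<k0}" "\<forall>x<k0. card {A\<in>Q'. x\<in>A} = r" "card Q' = n" by blast
  obtain B0 where B0: "is_base_Snr n r B0" "card B0 \<le> k0"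
    using base_from_design[OF Q'(1) Q'(3) Q'(2)] by blast
  have lb: "k0 \<le> card B" if "is_base_Snr n r B" for B
  proof (rule ccontr)
    assume "\<not> k0 \<le> card B"
    hence "(card B + 1)*(r+1) \<le> k0*(r+1)" by (intro mult_le_mono1) simp
    hence "card B*(r+1) + r + 1 \<le> k0*(r+1)" by (simp add: algebra_simps)
    thus False using lower[OF that] h2 n1 by linarith
  qed
  have cB0: "card B0 = k0" using lb[OF B0(1)] B0(2) by simp
  have bs: "base_size_Snr n r = k0"
    unfolding base_size_Snr_def
  proof (rule Least_equality)
    show "\<exists>B. is_base_Snr n r B \<and> card B = k0" using B0(1) cB0 by blast
  next
    fix c assume "\<exists>B. is_base_Snr n r B \<and> card B = c"
    thus "k0 \<le> c" using lb by blast
  qed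
  have rpos: "real r + 1 > 0" by simp
  have e1: "real (2*n - 2) = 2 * real n - 2" using n1 by simp
  have h1r: "2 * real n - 2 \<le> real k0 * (real r + 1)"
    using h1 e1 by (metis of_nat_le_iff of_nat_mult of_nat_add of_nat_1)
  have h2r: "real k0 * (real r + 1) \<le> 2 * real n - 2 + real r"
  proof -
    have "real (k0*(r+1)) \<le> real (2*n - 2 + r)" using h2 by (simp only: of_nat_le_iff)
    thus ?thesis using e1 by (simp add: algebra_simps)
  qed
  have "\<lceil>(2 * real n - 2) / (real r + 1)\<rceil> = int k0"
  proof (rule ceiling_unique)
    show "(2 * real n - 2) / (real r + 1) \<le> real_of_int (int k0)"
      using h1r rpos by (simp add: divide_le_eq)
    have "(real k0 - 1) * (real r + 1) < 2 * real n - 2" using h2r by (simp add: algebra_simps)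
    thus "real_of_int (int k0) - 1 < (2 * real n - 2) / (real r + 1)"
      using rpos by (simp add: less_divide_eq)
  qed
  thus ?thesis using bs by simp
qed

end
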